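(* (1) If $(\alpha^*,u_1^* )$ is an inverse Stackelberg solution, then the pair $(u_0^*,u_1^* )$ with $u_0^*=\alpha^*[u_1^*]$ belongs to $\mathcal{A}$ and $(u_0^*,u_1^* )\in\operatorname{Argmax}\{J_0(u_0,u_1):(u_0,u_1)\in\mathcal{A}\}$. (2) If $(u_0^*,u_1^* )\in\mathcal{A}$ satisfies $(u_0^*,u_1^* )\in\operatorname{Argmax}\{J_0(u_0,u_1):(u_0,u_1)\in\mathcal{A}\}$, then there exists an incentive strategy $\alpha^*$ of the leader such that $\alpha^*[u_1^*]=u_0^*$ and $(\alpha^*,u_1^* )$ is an inverse Stackelberg solution. (3) There exists at least one inverse Stackelberg solution.
   Context: Two-player static game: player $0$ is the leader, player $1$ the follower. $P_0,P_1$ are nonempty compact metric spaces (strategy sets) and $J_0,J_1:P_0\times P_1\to\mathbb{R}$ are continuous payoff functions; each player maximizes his payoff. An incentive strategy of the leader is an arbitrary map $\alpha:P_1\to P_0$, written $u_1\mapsto\alpha[u_1]$. The set of optimal strategies of the follower against $\alpha$ is $\mathcal{F}(\alpha)=\{u_1^*\in P_1: J_1(\alpha[u_1],u_1)\le J_1(\alpha[u_1^*],u_1^* )\ \text{for all } u_1\in P_1\}$. A pair $(\alpha^*,u_1^* )$ (incentive strategy, follower strategy) is an inverse Stackelberg solution if $u_1^*\in\mathcal{F}(\alpha^* )$ and for every incentive strategy $\alpha$, $J_0(\alpha^*[u_1^*],u_1^* )\ge\sup\{J_0(\alpha[u_1],u_1):u_1\in\mathcal{F}(\alpha)\}$ (with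 $\sup\emptyset=-\infty$). Let $V^-=\max_{u_1\in P_1}\min_{u_0\in P_0}J_1(u_0,u_1)$ and $\mathcal{A}=\{(u_0,u_1)\in P_0\times P_1: J_1(u_0,u_1)\ge V^-\}$. *)

theory Defs
  imports "HOL-Analysis.Analysis"
begin

text \<open>Incentive strategies of the leader: arbitrary maps from P1 into P0
  (values outside P1 are irrelevant).\<close>
definition incentive :: "'a set \<Rightarrow> 'b set \<Rightarrow> ('b \<Rightarrow> 'a) \<Rightarrow> bool" where
  "incentive P0 P1 \<alpha> \<longleftrightarrow> (\<forall>u1\<in>P1. \<alpha> u1 \<in> P0)"

definition follower_opt :: "'b set \<Rightarrow> ('a \<times> 'b \<Rightarrow> real) \<Rightarrow> ('b \<Rightarrow> 'a) \<Rightarrow> 'b set" where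
  "follower_opt P1 J1 \<alpha> =
     {u1s \<in> P1. \<forall>u1\<in>P1. J1 (\<alpha> u1, u1) \<le> J1 (\<alpha> u1s, u1s)}"

text \<open>Inverse Stackelberg solution; the supremum is taken in the extended reals,
  so that the supremum of the empty set is minus infinity.\<close>
definition inv_stackelberg ::
  "'a set \<Rightarrow> 'b set \<Rightarrow> ('a \<times> 'b \<Rightarrow> real) \<Rightarrow> ('a \<times> 'b \<Rightarrow> real) \<Rightarrow> ('b \<Rightarrow> 'a) \<Rightarrow> 'b \<Rightarrow> bool" where
  "inv_stackelberg P0 P1 J0 J1 \<alpha>s u1s \<longleftrightarrow>
     incentive P0 P1 \<alpha>s \<and> u1s \<in> follower_opt P1 J1 \<alpha>s \<and>
     (\<forall>\<alpha>. incentive P0 P1 \<alpha> \<longrightarrow>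
        (SUP u1\<in>follower_opt P1 J1 \<alpha>. ereal (J0 (\<alpha> u1, u1))) \<le> ereal (J0 (\<alpha>s u1s, u1s)))"

text \<open>V^- = max over u1 of min over u0 of J1 (the extrema are attained by compactness
  and continuity, so they coincide with SUP/INF).\<close>
definition V_minus :: "'a set \<Rightarrow> 'b set \<Rightarrow> ('a \<times> 'b \<Rightarrow> real) \<Rightarrow> real" where
  "V_minus P0 P1 J1 = (SUP u1\<in>P1. INF u0\<in>P0. J1 (u0, u1))"

definition admissible_set :: "'a set \<Rightarrow> 'b set \<Rightarrow> ('a \<times> 'b \<Rightarrow> real) \<Rightarrow> ('a \<times> 'b) set" where
  "admissible_set P0 P1 J1 = {p \<in> P0 \<times> P1. J1 p \<ge> V_minus P0 P1 J1}"

definition Argmax :: "('c \<Rightarrow> real) \<Rightarrow> 'c set \<Rightarrow> 'c set" where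
  "Argmax f S = {x \<in> S. \<forall>y\<in>S. f y \<le> f x}"

end

theory Submission
  imports Defs
begin

theorem theorem1:
  fixes P0 :: "'a::metric_space set" and P1 :: "'b::metric_space set"
    and J0 J1 :: "'a \<times> 'b \<Rightarrow> real"
  assumes "compact P0" "P0 \<noteq> {}" "compact P1" "P1 \<noteq> {}"
    and "continuous_on (P0 \<times> P1) J0" "continuous_on (P0 \<times> P1) J1"
  shows "(\<forall>\<alpha>s u1s. inv_stackelberg P0 P1 J0 J1 \<alpha>s u1s \<longrightarrow>
            (\<alpha>s u1s, u1s) \<in> admissible_set P0 P1 J1 \<and>
            (\<alpha>s u1s, u1s) \<in> Argmax J0 (admissible_set P0 P1 J1))
       \<and> (\<forall>u0s u1s. (u0s, u1s) \<in> admissible_set P0 P1 J1 \<and>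
            (u0s, u1s) \<in> Argmax J0 (admissible_set P0 P1 J1) \<longrightarrow>
            (\<exists>\<alpha>s. incentive P0 P1 \<alpha>s \<and> \<alpha>s u1s = u0s \<and> inv_stackelberg P0 P1 J0 J1 \<alpha>s u1s))
       \<and> (\<exists>\<alpha>s u1s. inv_stackelberg P0 P1 J0 J1 \<alpha>s u1s)"
proof -
  define V where "V = V_minus P0 P1 J1"
  define g where "g = (\<lambda>u1. INF u0\<in>P0. J1 (u0, u1))"
  define A where "A = admissible_set P0 P1 J1"
  have V: "V = (SUP u1\<in>P1. g u1)" unfolding V_def V_minus_def g_def by simp
  have A: "A = {p \<in> P0 \<times> P1. J1 p \<ge> V}" unfolding A_def admissible_set_def V_def by simp
  have cpt: "compact (P0 \<times> P1)" using assms compact_Times by blast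
  have "compact (J1 ` (P0 \<times> P1))" using compact_continuous_image[OF assms(6) cpt] .
  hence bd: "bounded (J1 ` (P0 \<times> P1))" by (rule compact_imp_bounded)
  obtain B where B: "\<And>p. p \<in> P0 \<times> P1 \<Longrightarrow> \<bar>J1 p\<bar> \<le> B"
    using bd unfolding bounded_iff by fastforce
  have slice: "continuous_on P0 (\<lambda>u0. J1 (u0, u1))" if "u1 \<in> P1" for u1
    by (rule continuous_on_compose2[OF assms(6) continuous_on_Pair[OF continuous_on_id continuous_on_const]])
       (use that in auto)
  have slice2: "continuous_on P1 (\<lambda>u1. J1 (u0, u1))" if "u0 \<in> P0" for u0
    by (rule continuous_on_compose2[OF assms(6) continuous_on_Pair[OF continuous_on_const continuous_on_id]])
       (use that in auto)
  have bdb: "bdd_below ((\<lambda>u0. J1 (u0, u1)) ` P0)" if "u1 \<in> P1" for u1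
  proof (rule bdd_belowI[where m="-B"])
    fix x assume "x \<in> (\<lambda>u0. J1 (u0, u1)) ` P0"
    then obtain u0 where "u0 \<in> P0" "x = J1 (u0, u1)" by blast
    thus "-B \<le> x" using B[of "(u0,u1)"] that by auto
  qed
  have glow: "g u1 \<le> J1 (u0, u1)" if "u1 \<in> P1" "u0 \<in> P0" for u0 u1
    unfolding g_def by (rule cINF_lower[OF bdb[OF that(1)] that(2)])
  have "\<exists>x\<in>P0. \<forall>y\<in>P0. J1 (x, u1) \<le> J1 (y, u1)" if "u1 \<in> P1" for u1
    using continuous_attains_inf[OF assms(1,2) slice[OF that]] by blast
  then obtain m where m: "\<And>u1. u1 \<in> P1 \<Longrightarrow> m u1 \<in> P0 \<and> (\<forall>y\<in>P0. J1 (m u1, u1) \<le> J1 (y, u1))"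
    by metis
  have gm: "g u1 = J1 (m u1, u1)" if "u1 \<in> P1" for u1
  proof -
    have "g u1 \<ge> J1 (m u1, u1)" unfolding g_def
      using m[OF that] assms(2) by (intro cINF_greatest) auto
    thus ?thesis using glow[OF that] m[OF that] by fastforce
  qed
  have bda: "bdd_above (g ` P1)"
  proof -
    obtain u0 where u0: "u0 \<in> P0" using assms(2) by blast
    show ?thesis
    proof (rule bdd_aboveI[where M=B])
      fix x assume "x \<in> g ` P1"
      then obtain u1 where u1: "u1 \<in> P1" "x = g u1" by blast
      thus "x \<le> B" using glow[OF u1(1) u0] B[of "(u0,u1)"] u0 by auto
    qed
  qed
  have gV: "g v \<le> V" if "v \<in> P1" for v
    unfolding V by (rule cSUP_upper[OF that bda])
  have mV: "m v \<in> P0 \<and> J1 (m v, v) \<le> V" if "v \<in> P1" for v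
    using gm[OF that] gV[OF that] m[OF that] by simp
  have optV: "V \<le> J1 (\<alpha> u1, u1)" if "incentive P0 P1 \<alpha>" "u1 \<in> follower_opt P1 J1 \<alpha>" for \<alpha> u1
  proof -
    have "g v \<le> J1 (\<alpha> u1, u1)" if "v \<in> P1" for v
      using glow[OF that, of "\<alpha> v"] \<open>incentive P0 P1 \<alpha>\<close> \<open>u1 \<in> follower_opt P1 J1 \<alpha>\<close> that
      unfolding incentive_def follower_opt_def by force
    thus ?thesis unfolding V using assms(4) by (intro cSUP_least) auto
  qed
  have optA: "(\<alpha> u1, u1) \<in> A" if "incentive P0 P1 \<alpha>" "u1 \<in> follower_opt P1 J1 \<alpha>" for \<alpha> u1
    using optV[OF that] that unfolding A incentive_def follower_opt_def by auto
  define mk where "mk = (\<lambda>u0 u1 v. if v = u1 then u0 else m v)"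
  have mk_inc: "incentive P0 P1 (mk u0 u1)" if "(u0,u1) \<in> A" for u0 u1
    using that mV unfolding A mk_def incentive_def by auto
  have mk_opt: "u1 \<in> follower_opt P1 J1 (mk u0 u1)" if "(u0,u1) \<in> A" for u0 u1
    using that mV unfolding A mk_def follower_opt_def by (auto intro: order_trans)
  have P1: "\<forall>\<alpha>s u1s. inv_stackelberg P0 P1 J0 J1 \<alpha>s u1s \<longrightarrow>
            (\<alpha>s u1s, u1s) \<in> A \<and> (\<alpha>s u1s, u1s) \<in> Argmax J0 A"
  proof (intro allI impI)
    fix \<alpha>s u1s assume h: "inv_stackelberg P0 P1 J0 J1 \<alpha>s u1s"
    hence inA: "(\<alpha>s u1s, u1s) \<in> A" using optA unfolding inv_stackelberg_def by blast
    have "J0 y \<le> J0 (\<alpha>s u1s, u1s)" if "y \<in> A" for y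
    proof -
      obtain u0 u1 where y: "y = (u0,u1)" by fastforce
      have "ereal (J0 (mk u0 u1 u1, u1)) \<le> (SUP v\<in>follower_opt P1 J1 (mk u0 u1). ereal (J0 (mk u0 u1 v, v)))"
        by (rule SUP_upper[OF mk_opt]) (use that y in simp)
      also have "\<dots> \<le> ereal (J0 (\<alpha>s u1s, u1s))"
        using h mk_inc[of u0 u1] that y unfolding inv_stackelberg_def by blast
      finally show ?thesis using y by (simp add: mk_def)
    qed
    thus "(\<alpha>s u1s, u1s) \<in> A \<and> (\<alpha>s u1s, u1s) \<in> Argmax J0 A"
      using inA unfolding Argmax_def by blast
  qed
  have P2: "\<forall>u0s u1s. (u0s, u1s) \<in> A \<and> (u0s, u1s) \<in> Argmax J0 A \<longrightarrow>
            (\<exists>\<alpha>s. incentive P0 P1 \<alpha>s \<and> \<alpha>s u1s = u0s \<and> inv_stackelberg P0 P1 J0 J1 \<alpha>s u1s)"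
  proof (intro allI impI)
    fix u0s u1s assume h: "(u0s, u1s) \<in> A \<and> (u0s, u1s) \<in> Argmax J0 A"
    have "(SUP u1\<in>follower_opt P1 J1 \<alpha>. ereal (J0 (\<alpha> u1, u1))) \<le> ereal (J0 (mk u0s u1s u1s, u1s))"
      if "incentive P0 P1 \<alpha>" for \<alpha>
    proof (rule SUP_least)
      fix u1 assume "u1 \<in> follower_opt P1 J1 \<alpha>"
      hence "(\<alpha> u1, u1) \<in> A" using optA that by blast
      thus "ereal (J0 (\<alpha> u1, u1)) \<le> ereal (J0 (mk u0s u1s u1s, u1s))"
        using h unfolding Argmax_def mk_def by auto
    qed
    thus "\<exists>\<alpha>s. incentive P0 P1 \<alpha>s \<and> \<alpha>s u1s = u0s \<and> inv_stackelberg P0 P1 J0 J1 \<alpha>s u1s"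
      using mk_inc[of u0s u1s] mk_opt[of u0s u1s] h
      by (intro exI[of _ "mk u0s u1s"]) (auto simp: inv_stackelberg_def mk_def)
  qed
  have Ane: "A \<noteq> {}"
  proof -
    have "\<exists>v\<in>P1. g v > V - inverse (real (Suc n))" for n
      unfolding V using assms(4) bda by (subst less_cSUP_iff[symmetric]) auto
    then obtain f where f: "\<And>n. f n \<in> P1 \<and> g (f n) > V - inverse (real (Suc n))" by metis
    obtain l r where l: "l \<in> P1" "strict_mono r" "(f \<circ> r) \<longlonglongrightarrow> l"
      using compact_imp_seq_compact[OF assms(3)] f unfolding seq_compact_def by metis
    obtain u0 where u0: "u0 \<in> P0" using assms(2) by blast
    have "V \<le> J1 (u0, l)"
    proof (rule tendsto_le[OF trivial_limit_sequentially])
      show "(\<lambda>n. J1 (u0, (f \<circ> r) n)) \<longlonglongrightarrow> J1 (u0, l)"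
        by (rule continuous_on_tendsto_compose[OF slice2[OF u0] l(3) l(1)]) (use f in auto)
      show "(\<lambda>n. V + - inverse (real (Suc n))) \<longlonglongrightarrow> V"
        by (rule LIMSEQ_inverse_real_of_nat_add_minus)
      show "\<forall>\<^sub>F n in sequentially. V + - inverse (real (Suc n)) \<le> J1 (u0, (f \<circ> r) n)"
      proof (rule always_eventually, rule allI)
        fix n
        have "n \<le> r n" using seq_suble[OF l(2)] .
        hence "inverse (real (Suc (r n))) \<le> inverse (real (Suc n))"
          by (simp add: le_imp_inverse_le)
        moreover have "V - inverse (real (Suc (r n))) < g (f (r n))" using f by blast
        moreover have "g (f (r n)) \<le> J1 (u0, f (r n))" using glow f u0 by blast
        ultimately show "V + - inverse (real (Suc n)) \<le> J1 (u0, (f \<circ> r) n)" unfolding o_apply by linarith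
      qed
    qed
    thus ?thesis using u0 l(1) unfolding A by blast
  qed
  have "closed {p \<in> P0 \<times> P1. (\<lambda>_. V) p \<le> J1 p}"
    by (rule continuous_on_closed_Collect_le[OF continuous_on_const assms(6)])
       (use cpt compact_imp_closed in blast)
  hence "compact ((P0 \<times> P1) \<inter> {p \<in> P0 \<times> P1. (\<lambda>_. V) p \<le> J1 p})"
    by (rule compact_Int_closed[OF cpt])
  moreover have "(P0 \<times> P1) \<inter> {p \<in> P0 \<times> P1. (\<lambda>_. V) p \<le> J1 p} = A" unfolding A by blast
  ultimately have "compact A" by simp
  moreover have "continuous_on A J0" using assms(5) by (rule continuous_on_subset) (auto simp: A)
  ultimately obtain p where p: "p \<in> A" "\<forall>y\<in>A. J0 y \<le> J0 p"
    using continuous_attains_sup Ane by blast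
  have "p \<in> Argmax J0 A" using p unfolding Argmax_def by blast
  hence P3: "\<exists>\<alpha>s u1s. inv_stackelberg P0 P1 J0 J1 \<alpha>s u1s"
    using P2 p(1) by (metis prod.collapse)
  show ?thesis using P1 P2 P3 unfolding A_def by blast
qed

end
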